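(* Let $m=n(n+1)/2$ and let $T:\mathcal{S}^n\to\mathbb{R}^m$ be the natural linear isomorphism (recording the entries on and above the diagonal) with $T(\mathcal{N}^n_+)=\mathbb{R}^m_+$. Then $\mathrm{Sem}(\mathcal{N}^n_+)$ is the set of all maps on $\mathcal{S}^n$ of the form $T^{-1}(YX^{-1})T$, where $X$ and $Y$ are entrywise positive $m\times m$ real matrices with $X$ invertible.
   Context: $\mathcal{S}^n$ denotes the space of real symmetric $n\times n$ matrices and $\mathcal{N}^n_+$ the cone of entrywise nonnegative matrices in $\mathcal{S}^n$; $\mathbb{R}^m_+$ is the nonnegative orthant. For a proper cone $K$ in a space $V$ with interior $K^{\circ}$, $\mathrm{Sem}(K)$ is the set of linear maps $L:V\to V$ for which there exists $x\in K^{\circ}$ with $L(x)\in K^{\circ}$. A matrix is entrywise positive if all its entries are strictly positive. *)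

theory Defs
  imports "HOL-Analysis.Analysis"
begin

definition Sym :: "(real^'n^'n) set" where
  "Sym = {A. transpose A = A}"

definition Nplus :: "(real^'n^'n) set" where
  "Nplus = {A \<in> Sym. \<forall>i j. 0 \<le> A $ i $ j}"

definition int_in :: "'a::metric_space set \<Rightarrow> 'a set \<Rightarrow> 'a set" where
  "int_in V K = {x \<in> K. \<exists>e>0. ball x e \<inter> V \<subseteq> K}"

definition lin_map_on :: "'a::real_vector set \<Rightarrow> ('a \<Rightarrow> 'a) \<Rightarrow> bool" where
  "lin_map_on V L \<longleftrightarrow> (\<forall>x\<in>V. L x \<in> V) \<and>
     (\<forall>x\<in>V. \<forall>y\<in>V. L (x + y) = L x + L y) \<and> (\<forall>c. \<forall>x\<in>V. L (c *\<^sub>R x) = c *\<^sub>R L x)"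

definition Sem :: "'a::real_normed_vector set \<Rightarrow> 'a set \<Rightarrow> ('a \<Rightarrow> 'a) set" where
  "Sem V K = {L. lin_map_on V L \<and> (\<exists>x \<in> int_in V K. L x \<in> int_in V K)}"

definition entrywise_pos :: "real^'m^'k \<Rightarrow> bool" where
  "entrywise_pos X \<longleftrightarrow> (\<forall>i j. 0 < X $ i $ j)"

text \<open>An enumeration e of the index set {(i,j). i <= j} of entries on and above the diagonal
  by the index type 'm (so CARD('m) = n(n+1)/2).\<close>
definition upper_enum :: "('m::finite \<Rightarrow> 'n::{finite,linorder} \<times> 'n) \<Rightarrow> bool" where
  "upper_enum e \<longleftrightarrow> bij_betw e UNIV {(i,j). i \<le> j}"

definition Tmap :: "('m::finite \<Rightarrow> ('n::{finite,linorder}) \<times> ('n::{finite,linorder})) \<Rightarrow> real^('n::{finite,linorder})^('n::{finite,linorder}) \<Rightarrow> real^'m" where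
  "Tmap e A = (\<chi> k. A $ fst (e k) $ snd (e k))"

definition Tinv :: "('m::finite \<Rightarrow> ('n::{finite,linorder}) \<times> ('n::{finite,linorder})) \<Rightarrow> real^'m \<Rightarrow> real^('n::{finite,linorder})^('n::{finite,linorder})" where
  "Tinv e v = (\<chi> i j. v $ (inv_into UNIV e (min i j, max i j)))"

end

theory Submission
  imports Defs
begin

lemma minv: assumes "invertible (A::real^'n^'n)"
  shows "A ** matrix_inv A = mat 1 \<and> matrix_inv A ** A = mat 1"
  using assms unfolding invertible_def matrix_inv_def by (rule someI_ex)

lemma Sym_iff: "A \<in> Sym \<longleftrightarrow> (\<forall>i j. A$i$j = A$j$i)"
  unfolding Sym_def transpose_def by (auto simp: vec_eq_iff)

lemma int_char: "A \<in> int_in Sym Nplus \<longleftrightarrow> A \<in> Sym \<and> (\<forall>i j. 0 < (A::real^'n^'n)$i$j)"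
proof
  assume a: "A \<in> int_in Sym Nplus"
  then have AN: "A \<in> Nplus" and "\<exists>e>0. ball A e \<inter> Sym \<subseteq> Nplus" unfolding int_in_def by auto
  then obtain e where e: "e > 0" "ball A e \<inter> Sym \<subseteq> Nplus" by auto
  have AS: "A \<in> Sym" using AN unfolding Nplus_def by auto
  have "0 < A$i$j" for i j
  proof (rule ccontr)
    assume "\<not> 0 < A$i$j"
    moreover have "0 \<le> A$i$j" using AN unfolding Nplus_def by auto
    ultimately have z: "A$i$j = 0" by auto
    define J :: "real^'n^'n" where "J = (\<chi> i j. 1)"
    define c where "c = e / (2 * (norm J + 1))"
    have "norm J + 1 > 0" by (smt (verit) norm_ge_zero)
    then have cpos: "c > 0" using e unfolding c_def by (intro divide_pos_pos) auto
    define B where "B = A - c *\<^sub>R J"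
    have "B \<in> Sym" using AS unfolding Sym_iff B_def J_def by simp
    moreover have "dist A B < e"
    proof -
      have "dist A B = c * norm J" using cpos by (simp add: B_def dist_norm)
      also have "\<dots> = (e/2) * (norm J / (norm J + 1))" unfolding c_def by simp
      also have "\<dots> < (e/2) * 1"
        by (rule mult_strict_left_mono) (use \<open>norm J + 1 > 0\<close> e in auto)
      also have "\<dots> < e" using e by simp
      finally show ?thesis .
    qed
    ultimately have "B \<in> Nplus" using e by auto
    then have "0 \<le> B$i$j" unfolding Nplus_def by auto
    then show False using z cpos by (simp add: B_def J_def)
  qed
  then show "A \<in> Sym \<and> (\<forall>i j. 0 < A$i$j)" using AS by auto
next
  assume a: "A \<in> Sym \<and> (\<forall>i j. 0 < (A::real^'n^'n)$i$j)"
  define S where "S = {A$i$j | i j. True}"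
  have fS: "finite S" unfolding S_def
  proof -
    have "{A$i$j | i j. True} = (\<lambda>(i,j). A$i$j) ` UNIV" by auto
    then show "finite {A$i$j | i j. True}" by simp
  qed
  have neS: "S \<noteq> {}" unfolding S_def by auto
  define d where "d = Min S"
  have dpos: "d > 0" unfolding d_def using fS neS a by (auto simp: S_def)
  have dle: "d \<le> A$i$j" for i j unfolding d_def using fS by (auto simp: S_def intro!: Min_le)
  have "ball A d \<inter> Sym \<subseteq> Nplus"
  proof
    fix B assume B: "B \<in> ball A d \<inter> Sym"
    have "0 \<le> B$i$j" for i j
    proof -
      have "\<bar>(A - B)$i$j\<bar> \<le> norm ((A-B)$i)" by (rule component_le_norm_cart)
      also have "\<dots> \<le> norm (A - B)" by (rule Finite_Cartesian_Product.norm_nth_le)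
      also have "\<dots> < d" using B by (simp add: dist_norm)
      finally show ?thesis using dle[of i j] by auto
    qed
    then show "B \<in> Nplus" using B unfolding Nplus_def by auto
  qed
  moreover have "A \<in> Nplus" using a unfolding Nplus_def by (auto intro: less_imp_le)
  ultimately show "A \<in> int_in Sym Nplus" unfolding int_in_def using dpos by auto
qed

lemma Tmap_Tinv: assumes "upper_enum e" shows "Tmap e (Tinv e v) = v"
proof -
  have b: "bij_betw e UNIV {(i,j). i \<le> j}" using assms unfolding upper_enum_def .
  have "inv_into UNIV e (min (fst (e k)) (snd (e k)), max (fst (e k)) (snd (e k))) = k" for k
  proof -
    obtain a c where ek: "e k = (a, c)" by (cases "e k")
    have "e k \<in> {(i,j). i \<le> j}" by (rule bij_betw_apply[OF b]) simp
    then have "a \<le> c" using ek by simp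
    then have "(min (fst (e k)) (snd (e k)), max (fst (e k)) (snd (e k))) = e k"
      using ek by (simp add: min_def max_def)
    then show ?thesis using b bij_betw_imp_inj_on inv_into_f_f by fastforce
  qed
  then show ?thesis unfolding Tmap_def Tinv_def by (simp add: vec_eq_iff)
qed

lemma Tinv_Tmap: assumes "upper_enum e" "A \<in> Sym" shows "Tinv e (Tmap e A) = A"
proof -
  have b: "bij_betw e UNIV {(i,j). i \<le> j}" using assms(1) unfolding upper_enum_def .
  have "e (inv_into UNIV e (min i j, max i j)) = (min i j, max i j)" for i j
    using b by (auto intro!: bij_betw_inv_into_right simp: min_def max_def)
  moreover have "A $ min i j $ max i j = A$i$j" for i j
    using assms(2) unfolding Sym_iff by (cases "i \<le> j") (auto simp: min_def max_def)
  ultimately show ?thesis unfolding Tmap_def Tinv_def by (simp add: vec_eq_iff)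
qed

lemma Tinv_Sym: "Tinv e v \<in> Sym"
  unfolding Sym_iff Tinv_def by (simp add: min.commute max.commute)

lemma Tinv_add: "Tinv e (v + w) = Tinv e v + Tinv e w"
  unfolding Tinv_def by (simp add: vec_eq_iff)
lemma Tinv_scale: "Tinv e (c *\<^sub>R v) = c *\<^sub>R Tinv e v"
  unfolding Tinv_def by (simp add: vec_eq_iff)
lemma Tmap_add: "Tmap e (v + w) = Tmap e v + Tmap e w"
  unfolding Tmap_def by (simp add: vec_eq_iff)
lemma Tmap_scale: "Tmap e (c *\<^sub>R v) = c *\<^sub>R Tmap e v"
  unfolding Tmap_def by (simp add: vec_eq_iff)

theorem mainTheorem8:
  fixes e :: "'m::finite \<Rightarrow> 'n::{finite,linorder} \<times> 'n"
  assumes "upper_enum e"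
  shows "Sem Sym Nplus =
    {L. lin_map_on Sym L \<and>
        (\<exists>X Y :: real^'m^'m. entrywise_pos X \<and> entrywise_pos Y \<and> invertible X \<and>
           (\<forall>A\<in>Sym. L A = Tinv e ((Y ** matrix_inv X) *v Tmap e A)))}"
proof (rule set_eqI, rule iffI)
  fix L :: "real^'n::{finite,linorder}^'n::{finite,linorder} \<Rightarrow> real^'n::{finite,linorder}^'n::{finite,linorder}" assume "L \<in> Sem Sym Nplus"
  then obtain x where lin: "lin_map_on Sym L" and xi: "x \<in> int_in Sym Nplus" and Lxi: "L x \<in> int_in Sym Nplus"
    unfolding Sem_def by auto
  have LS: "\<And>A. A \<in> Sym \<Longrightarrow> L A \<in> Sym" and Ladd: "\<And>A B. A \<in> Sym \<Longrightarrow> B \<in> Sym \<Longrightarrow> L (A + B) = L A + L B"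
    and Lsc: "\<And>c A. A \<in> Sym \<Longrightarrow> L (c *\<^sub>R A) = c *\<^sub>R L A" using lin unfolding lin_map_on_def by auto
  define g where "g v = Tmap e (L (Tinv e v))" for v
  have lg: "linear g"
    by (rule linearI) (simp_all add: g_def Tinv_add Tinv_scale Tmap_add Tmap_scale Ladd Lsc Tinv_Sym)
  define M where "M = matrix g"
  have Mv: "M *v v = g v" for v unfolding M_def using lg
    by (simp add: matrix_works linear_matrix_vector_mul_eq)
  have xS: "x \<in> Sym" and xp: "\<And>i j. 0 < x$i$j" using xi int_char by auto
  have Lxp: "\<And>i j. 0 < L x$i$j" using Lxi int_char by auto
  define u where "u = Tmap e x"
  have up: "0 < u$k" for k unfolding u_def Tmap_def using xp by simp
  have Mu: "M *v u = Tmap e (L x)" unfolding Mv g_def u_def using Tinv_Tmap[OF assms xS] by simp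
  have Mup: "0 < (M *v u)$k" for k unfolding Mu Tmap_def using Lxp by simp
  define d where "d = Min (range (\<lambda>i. (M *v u)$i))"
  have dpos: "d > 0" unfolding d_def using Mup by simp
  have dle: "d \<le> (M *v u)$i" for i unfolding d_def by simp
  define S where "S = (\<Sum>i\<in>UNIV. \<Sum>j\<in>UNIV. \<bar>M$i$j\<bar>)"
  have Sge: "\<bar>M$i$j\<bar> \<le> S" for i j
  proof -
    have "\<bar>M$i$j\<bar> \<le> (\<Sum>j\<in>UNIV. \<bar>M$i$j\<bar>)"
      by (rule member_le_sum) auto
    also have "\<dots> \<le> S" unfolding S_def
      by (rule member_le_sum[where f="\<lambda>i. \<Sum>j\<in>UNIV. \<bar>M$i$j\<bar>"]) (auto intro: sum_nonneg)
    finally show ?thesis .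
  qed
  have S0: "S \<ge> 0" using Sge[of undefined undefined] by linarith
  define \<epsilon> where "\<epsilon> = d / (S + 1)"
  have epos: "\<epsilon> > 0" unfolding \<epsilon>_def using dpos S0 by simp
  have eM: "\<epsilon> * \<bar>M$i$j\<bar> < d" for i j
  proof -
    have "\<epsilon> * \<bar>M$i$j\<bar> \<le> \<epsilon> * S" using Sge epos by (simp add: mult_left_mono)
    also have "\<dots> < \<epsilon> * (S + 1)" using epos by simp
    also have "\<dots> = d" unfolding \<epsilon>_def using S0 by simp
    finally show ?thesis .
  qed
  define X :: "real^'m^'m" where "X = (\<chi> i j. u$i + (if i = j then \<epsilon> else 0))"
  define Y where "Y = M ** X"
  have Xp: "entrywise_pos X" unfolding entrywise_pos_def X_def using up epos
    by (simp add: add_pos_nonneg)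
  have Yent: "Y$i$j = (M *v u)$i + \<epsilon> * M$i$j" for i j
  proof -
    have "Y$i$j = (\<Sum>k\<in>UNIV. M$i$k * u$k + (if k = j then \<epsilon> * M$i$k else 0))"
      unfolding Y_def X_def matrix_matrix_mult_def by (auto simp: algebra_simps intro!: sum.cong)
    also have "\<dots> = (M *v u)$i + \<epsilon> * M$i$j"
      unfolding matrix_vector_mult_def by (simp add: sum.distrib)
    finally show ?thesis .
  qed
  have Yp: "entrywise_pos Y" unfolding entrywise_pos_def Yent
  proof (intro allI)
    fix i j
    have "\<epsilon> * (- M$i$j) \<le> \<epsilon> * \<bar>M$i$j\<bar>"
      by (rule mult_left_mono) (use epos in auto)
    then have "- (\<epsilon> * M$i$j) \<le> \<epsilon> * \<bar>M$i$j\<bar>" by simp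
    then show "0 < (M *v u)$i + \<epsilon> * M$i$j" using eM[of i j] dle[of i] by linarith
  qed
  have Xinv: "invertible X"
  proof -
    have "\<forall>w. X *v w = 0 \<longrightarrow> w = 0"
    proof (intro allI impI)
      fix w assume w0: "X *v w = 0"
      define s where "s = sum (\<lambda>k. w$k) UNIV"
      have comp: "u$i * s + \<epsilon> * w$i = 0" for i
      proof -
        have "(X *v w)$i = (\<Sum>k\<in>UNIV. u$i * w$k + (if i = k then \<epsilon> * w$k else 0))"
          unfolding X_def matrix_vector_mult_def by (auto simp: algebra_simps intro!: sum.cong)
        also have "\<dots> = u$i * s + \<epsilon> * w$i"
          by (simp add: sum.distrib s_def sum_distrib_left)
        finally show ?thesis using w0 by simp
      qed
      have wi: "w$i = - u$i * s / \<epsilon>" for i using comp[of i] epos by (simp add: field_simps)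
      have "s = (\<Sum>k\<in>UNIV. w$k)" by (simp add: s_def)
      also have "\<dots> = (\<Sum>k\<in>UNIV. - u$k * s / \<epsilon>)" by (simp add: wi)
      also have "\<dots> = (- s / \<epsilon>) * (\<Sum>k\<in>UNIV. u$k)"
        by (subst sum_distrib_left) (simp add: algebra_simps)
      finally have "s * (\<epsilon> + (\<Sum>k\<in>UNIV. u$k)) = 0" using epos by (simp add: field_simps)
      moreover have "(\<Sum>k\<in>UNIV. u$k) \<ge> 0" using up by (simp add: sum_nonneg less_imp_le)
      ultimately have "s = 0" using epos by auto
      then show "w = 0" using wi by (simp add: vec_eq_iff)
    qed
    then show ?thesis using matrix_left_invertible_ker invertible_left_inverse by blast
  qed
  have YM: "Y ** matrix_inv X = M"
    unfolding Y_def using minv[OF Xinv] by (simp add: matrix_mul_assoc[symmetric])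
  have "\<forall>A\<in>Sym. L A = Tinv e ((Y ** matrix_inv X) *v Tmap e A)"
  proof
    fix A :: "real^'n::{finite,linorder}^'n::{finite,linorder}" assume A: "A \<in> Sym"
    have "Tinv e ((Y ** matrix_inv X) *v Tmap e A) = Tinv e (Tmap e (L (Tinv e (Tmap e A))))"
      unfolding YM Mv g_def ..
    also have "\<dots> = L A" using Tinv_Tmap[OF assms A] Tinv_Tmap[OF assms LS[OF A]] by simp
    finally show "L A = Tinv e ((Y ** matrix_inv X) *v Tmap e A)" by simp
  qed
  then show "L \<in> {L. lin_map_on Sym L \<and>
        (\<exists>X Y :: real^'m^'m. entrywise_pos X \<and> entrywise_pos Y \<and> invertible X \<and>
           (\<forall>A\<in>Sym. L A = Tinv e ((Y ** matrix_inv X) *v Tmap e A)))}"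
    using lin Xp Yp Xinv by blast
next
  fix L :: "real^'n::{finite,linorder}^'n::{finite,linorder} \<Rightarrow> real^'n::{finite,linorder}^'n::{finite,linorder}" assume "L \<in> {L. lin_map_on Sym L \<and>
        (\<exists>X Y :: real^'m^'m. entrywise_pos X \<and> entrywise_pos Y \<and> invertible X \<and>
           (\<forall>A\<in>Sym. L A = Tinv e ((Y ** matrix_inv X) *v Tmap e A)))}"
  then obtain X Y :: "real^'m^'m" where lin: "lin_map_on Sym L" and Xp: "entrywise_pos X"
    and Yp: "entrywise_pos Y" and Xi: "invertible X"
    and LA: "\<forall>A\<in>Sym. L A = Tinv e ((Y ** matrix_inv X) *v Tmap e A)" by blast
  define one :: "real^'m" where "one = (\<chi> i. 1)"
  have pos1: "0 < (Z *v one)$i" if "entrywise_pos Z" for Z :: "real^'m^'m" and i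
    using that unfolding entrywise_pos_def matrix_vector_mult_def one_def
    by (simp add: sum_pos)
  define x where "x = Tinv e (X *v one)"
  have xi: "x \<in> int_in Sym Nplus" unfolding int_char x_def
    using Tinv_Sym pos1[OF Xp] by (simp add: Tinv_def)
  have "L x = Tinv e ((Y ** matrix_inv X) *v (X *v one))"
    using LA[rule_format, OF Tinv_Sym[of e "X *v one"]] Tmap_Tinv[OF assms] unfolding x_def by simp
  also have "\<dots> = Tinv e (Y *v one)"
    using minv[OF Xi] by (simp add: matrix_vector_mul_assoc matrix_mul_assoc[symmetric])
  finally have "L x \<in> int_in Sym Nplus" unfolding int_char
    using Tinv_Sym pos1[OF Yp] by (simp add: Tinv_def)
  then show "L \<in> Sem Sym Nplus" unfolding Sem_def using lin xi by blast
qed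


end
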